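(* Let $\bar P=(P,P^* )\neq\bar Q=(Q,Q^* )$ be elements of $\bar M$. (1) If $P,P^*,Q,Q^*$ are all nonempty, $P\ne Q$ and $P^*\neq Q^*$, then $\bar P$ and $\bar Q$ are $T_1$ separated; moreover, no future-directed timelike curve $\gamma$ with $I^-[\gamma]=P$ has $\bar Q$ as a future endpoint (i.e. it is not true that every open neighbourhood of $\bar Q$ contains $\Phi$ of a final segment of $\gamma$). (2) If $P,P^*$ are nonempty and $Q^*=\emptyset$, then $\bar P$ and $\bar Q$ are $T_0$ separated. (3) If $P^*=\emptyset$ and $Q^*=\emptyset$, then $\bar P$ and $\bar Q$ are $T_1$ separated. (4) If $P^*=\emptyset$ and $Q=\emptyset$, then $\bar P$ and $\bar Q$ are $T_1$ separated. All separation statements refer to the topology $\bar{\mathcal T}$.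
   Context: Let $M$ be a strongly causal spacetime (a time-oriented Lorentzian manifold in which every point has a neighbourhood that no non-spacelike curve enters more than once). $I^\pm(p)$ denotes the chronological future/past of $p\in M$, $I^\pm(S)=\bigcup_{s\in S}I^\pm(s)$, and for a curve $\gamma$ we write $I^\pm[\gamma]=I^\pm(\gamma)$. A past-set is a set $I^-(S)$ with $S\subset M$. An IP is a nonempty past-set that is not the union of two proper subsets which are past-sets. IFs are defined dually. For an IP $P$, $f(P)=I^+(\{x:P\subset I^-(x)\})$. For an IF $P^*$, $p(P^* )=I^-(\{x:P^*\subset I^+(x)\})$. $R_{pf}$ is the set of pairs $(P,Q^* )$ (with $P$ an IP and $Q^*$ an IF) such that both of the following hold: - $Q^*$ is a maximal IF (under inclusion) contained in $f(P)$; - $P$ is a maximal IP contained in $p(Q^* )$. $\bar M$ is the set of pairs $\bar P=(P,P^* )$ such that one of the following holds: - $(P,P^* )\in R_{pf}$; - $P=\emptyset$ and $P^*$ is an IF occurring in no pair of $R_{pf}$; - $P^*=\emptyset$ and $P$ is an IP occurring in no pair of $R_{pf}$. $\Phi(p)=(I^-(p),I^+(p))$ is an injection $M\to\bar M$. Limits of sets: for past-sets $P_n$ and $Q$, $Q=\lim P_n$ means both of the following: - (i) each $x\in Q$ lies in $P_n$ for all sufficiently large $n$; - (ii) for each $x\in M$ with $I^-(x)\not\subset Q$, one has $I^-(x)\not\subset P_n$ for all sufficiently large $n$. Limits of future-sets are defined dually. For $\bar S\subset\bar M$ define: - $L^+_{IF}(\bar S)=\{\bar Q:Q^*\ne\emptyset,\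 Q^*\subset\bigcup_{\bar R\in\bar S}R^*\}$; - $L^-_{IP}(\bar S)=\{\bar Q:Q\ne\emptyset,\ Q\subset\bigcup_{\bar R\in\bar S}R\}$; - $Cl_{FB}(\bar S)=\bar S\cup\{\bar Q:Q^*=\emptyset,\ Q=\lim R_n\text{ for some sequence }\bar R_n\in\bar S\}$; - $Cl_{PB}(\bar S)=\bar S\cup\{\bar Q:Q=\emptyset,\ Q^*=\lim R^*_n\text{ for some sequence }\bar R_n\in\bar S\}$; - $L^+(\bar S)=Cl_{FB}[\bar S\cup L^+_{IF}(\bar S)]$; - $L^-(\bar S)=Cl_{PB}[\bar S\cup L^-_{IP}(\bar S)]$. $\bar{\mathcal T}$ is the coarsest topology on $\bar M$ in which $\bar M\setminus L^\pm(\bar S)$ are open for every $\bar S\subset\bar M$. Separation notions for two points $a\neq b$: - $T_0$ separated: some open set contains exactly one of them; - $T_1$ separated: there is an open set containing $a$ but not $b$, and an open set containing $b$ but not $a$. *)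

theory Defs
  imports "HOL-Analysis.Analysis"
begin

coinductive Cinf_on :: "'a::euclidean_space set \<Rightarrow> ('a \<Rightarrow> 'b::real_normed_vector) \<Rightarrow> bool" where
  "\<lbrakk>\<forall>x\<in>U. f differentiable (at x);
    \<forall>b\<in>Basis. Cinf_on U (\<lambda>x. frechet_derivative f (at x) b)\<rbrakk> \<Longrightarrow> Cinf_on U f"

type_synonym ('m, 'a) chart = "'m set \<times> ('m \<Rightarrow> 'a)"

definition trans_map :: "('m, 'a) chart \<Rightarrow> ('m, 'a) chart \<Rightarrow> 'a \<Rightarrow> 'a" where
  "trans_map c d = snd d \<circ> inv_into (fst c) (snd c)"

definition smooth_atlas :: "('m::topological_space, 'a::euclidean_space) chart set \<Rightarrow> bool" where
  "smooth_atlas A \<longleftrightarrow>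
     (\<Union>c\<in>A. fst c) = UNIV \<and>
     (\<forall>c\<in>A. open (fst c) \<and> open (snd c ` fst c) \<and>
              (\<exists>\<psi>. homeomorphism (fst c) (snd c ` fst c) (snd c) \<psi>)) \<and>
     (\<forall>c\<in>A. \<forall>d\<in>A. Cinf_on (snd c ` (fst c \<inter> fst d)) (trans_map c d))"

text \<open>Lorentzian signature (-,+,...,+) of a symmetric bilinear form.\<close>
definition lorentzian_form :: "('a::euclidean_space \<Rightarrow> 'a \<Rightarrow> real) \<Rightarrow> bool" where
  "lorentzian_form B \<longleftrightarrow> bilinear B \<and> (\<forall>u v. B u v = B v u) \<and>
     (\<exists>v. B v v < 0 \<and> (\<forall>w. w \<noteq> 0 \<and> B v w = 0 \<longrightarrow> B w w > 0))"

text \<open>G c x u v: metric components in chart c at coordinate point x.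
  T c x: components of a time-orientation vector field in chart c.\<close>
definition spacetime ::
  "('m::{t2_space, second_countable_topology}, 'a::euclidean_space) chart set
   \<Rightarrow> (('m, 'a) chart \<Rightarrow> 'a \<Rightarrow> 'a \<Rightarrow> 'a \<Rightarrow> real)
   \<Rightarrow> (('m, 'a) chart \<Rightarrow> 'a \<Rightarrow> 'a) \<Rightarrow> bool" where
  "spacetime A G T \<longleftrightarrow>
     DIM('a) \<ge> 2 \<and> smooth_atlas A \<and>
     (\<forall>c\<in>A. \<forall>x\<in>snd c ` fst c. lorentzian_form (G c x)) \<and>
     (\<forall>c\<in>A. \<forall>u v. Cinf_on (snd c ` fst c) (\<lambda>x. G c x u v)) \<and>
     (\<forall>c\<in>A. \<forall>d\<in>A. \<forall>x\<in>snd c ` (fst c \<inter> fst d). \<forall>u v.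
        G c x u v = G d (trans_map c d x)
                         (frechet_derivative (trans_map c d) (at x) u)
                         (frechet_derivative (trans_map c d) (at x) v)) \<and>
     (\<forall>c\<in>A. continuous_on (snd c ` fst c) (T c)) \<and>
     (\<forall>c\<in>A. \<forall>x\<in>snd c ` fst c. G c x (T c x) (T c x) < 0) \<and>
     (\<forall>c\<in>A. \<forall>d\<in>A. \<forall>x\<in>snd c ` (fst c \<inter> fst d).
        T d (trans_map c d x) = frechet_derivative (trans_map c d) (at x) (T c x))"

definition future_timelike :: "(('m, 'a) chart \<Rightarrow> 'a \<Rightarrow> 'a \<Rightarrow> 'a \<Rightarrow> real)
   \<Rightarrow> (('m, 'a) chart \<Rightarrow> 'a \<Rightarrow> 'a) \<Rightarrow> ('m, 'a) chart \<Rightarrow> 'a \<Rightarrow> 'a::euclidean_space \<Rightarrow> bool" where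
  "future_timelike G T c x v \<longleftrightarrow> G c x v v < 0 \<and> G c x v (T c x) < 0"

definition future_causal :: "(('m, 'a) chart \<Rightarrow> 'a \<Rightarrow> 'a \<Rightarrow> 'a \<Rightarrow> real)
   \<Rightarrow> (('m, 'a) chart \<Rightarrow> 'a \<Rightarrow> 'a) \<Rightarrow> ('m, 'a) chart \<Rightarrow> 'a \<Rightarrow> 'a::euclidean_space \<Rightarrow> bool" where
  "future_causal G T c x v \<longleftrightarrow> v \<noteq> 0 \<and> G c x v v \<le> 0 \<and> G c x v (T c x) < 0"

definition C1_piece :: "('m::topological_space, 'a::euclidean_space) chart set
   \<Rightarrow> (('m, 'a) chart \<Rightarrow> 'a \<Rightarrow> 'a \<Rightarrow> bool) \<Rightarrow> (real \<Rightarrow> 'm) \<Rightarrow> real \<Rightarrow> real \<Rightarrow> bool" where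
  "C1_piece A good \<gamma> s s' \<longleftrightarrow>
     continuous_on {s..s'} \<gamma> \<and>
     (\<exists>\<gamma>'. \<forall>c\<in>A.
        continuous_on {t\<in>{s..s'}. \<gamma> t \<in> fst c} (\<gamma>' c) \<and>
        (\<forall>t\<in>{s..s'}. \<gamma> t \<in> fst c \<longrightarrow>
           ((snd c \<circ> \<gamma>) has_vector_derivative \<gamma>' c t) (at t within {s..s'}) \<and>
           good c (snd c (\<gamma> t)) (\<gamma>' c t)))"

definition pw_curve :: "('m::topological_space, 'a::euclidean_space) chart set
   \<Rightarrow> (('m, 'a) chart \<Rightarrow> 'a \<Rightarrow> 'a \<Rightarrow> bool) \<Rightarrow> (real \<Rightarrow> 'm) \<Rightarrow> real \<Rightarrow> real \<Rightarrow> bool" where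
  "pw_curve A good \<gamma> a b \<longleftrightarrow> a < b \<and>
     (\<exists>K. finite K \<and> a \<in> K \<and> b \<in> K \<and> K \<subseteq> {a..b} \<and>
        (\<forall>s\<in>K. \<forall>s'\<in>K. s < s' \<and> {s<..<s'} \<inter> K = {} \<longrightarrow> C1_piece A good \<gamma> s s'))"

definition chron :: "('m::topological_space, 'a::euclidean_space) chart set
   \<Rightarrow> (('m, 'a) chart \<Rightarrow> 'a \<Rightarrow> 'a \<Rightarrow> 'a \<Rightarrow> real) \<Rightarrow> (('m, 'a) chart \<Rightarrow> 'a \<Rightarrow> 'a)
   \<Rightarrow> 'm \<Rightarrow> 'm \<Rightarrow> bool" where
  "chron A G T p q \<longleftrightarrow>
     (\<exists>\<gamma>. pw_curve A (future_timelike G T) \<gamma> 0 1 \<and> \<gamma> 0 = p \<and> \<gamma> 1 = q)"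

definition strongly_causal :: "('m::topological_space, 'a::euclidean_space) chart set
   \<Rightarrow> (('m, 'a) chart \<Rightarrow> 'a \<Rightarrow> 'a \<Rightarrow> 'a \<Rightarrow> real) \<Rightarrow> (('m, 'a) chart \<Rightarrow> 'a \<Rightarrow> 'a) \<Rightarrow> bool" where
  "strongly_causal A G T \<longleftrightarrow>
     (\<forall>p U. open U \<and> p \<in> U \<longrightarrow>
        (\<exists>V. open V \<and> p \<in> V \<and> V \<subseteq> U \<and>
           (\<forall>\<gamma> a b. pw_curve A (future_causal G T) \<gamma> a b \<longrightarrow>
                connected {t\<in>{a..b}. \<gamma> t \<in> V})))"

text \<open>A future-directed timelike curve defined on [0,1) (locally piecewise C1).\<close>
definition ftl_curve :: "('m::topological_space, 'a::euclidean_space) chart set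
   \<Rightarrow> (('m, 'a) chart \<Rightarrow> 'a \<Rightarrow> 'a \<Rightarrow> 'a \<Rightarrow> real) \<Rightarrow> (('m, 'a) chart \<Rightarrow> 'a \<Rightarrow> 'a)
   \<Rightarrow> (real \<Rightarrow> 'm) \<Rightarrow> bool" where
  "ftl_curve A G T \<gamma> \<longleftrightarrow> (\<forall>s\<in>{0<..<1}. pw_curve A (future_timelike G T) \<gamma> 0 s)"

text \<open>The chronological relation r: r p q means p \<ll> q.\<close>
definition Ifut :: "('m \<Rightarrow> 'm \<Rightarrow> bool) \<Rightarrow> 'm set \<Rightarrow> 'm set" where
  "Ifut r S = {q. \<exists>s\<in>S. r s q}"

definition Ipast :: "('m \<Rightarrow> 'm \<Rightarrow> bool) \<Rightarrow> 'm set \<Rightarrow> 'm set" where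
  "Ipast r S = {q. \<exists>s\<in>S. r q s}"

definition past_set :: "('m \<Rightarrow> 'm \<Rightarrow> bool) \<Rightarrow> 'm set \<Rightarrow> bool" where
  "past_set r P \<longleftrightarrow> (\<exists>S. P = Ipast r S)"

definition future_set :: "('m \<Rightarrow> 'm \<Rightarrow> bool) \<Rightarrow> 'm set \<Rightarrow> bool" where
  "future_set r P \<longleftrightarrow> (\<exists>S. P = Ifut r S)"

definition IP :: "('m \<Rightarrow> 'm \<Rightarrow> bool) \<Rightarrow> 'm set \<Rightarrow> bool" where
  "IP r P \<longleftrightarrow> P \<noteq> {} \<and> past_set r P \<and>
     \<not> (\<exists>A B. past_set r A \<and> past_set r B \<and> A \<subset> P \<and> B \<subset> P \<and> P = A \<union> B)"

definition IF :: "('m \<Rightarrow> 'm \<Rightarrow> bool) \<Rightarrow> 'm set \<Rightarrow> bool" where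
  "IF r P \<longleftrightarrow> P \<noteq> {} \<and> future_set r P \<and>
     \<not> (\<exists>A B. future_set r A \<and> future_set r B \<and> A \<subset> P \<and> B \<subset> P \<and> P = A \<union> B)"

definition fop :: "('m \<Rightarrow> 'm \<Rightarrow> bool) \<Rightarrow> 'm set \<Rightarrow> 'm set" where
  "fop r P = Ifut r {x. P \<subseteq> Ipast r {x}}"

definition pop :: "('m \<Rightarrow> 'm \<Rightarrow> bool) \<Rightarrow> 'm set \<Rightarrow> 'm set" where
  "pop r P = Ipast r {x. P \<subseteq> Ifut r {x}}"

definition Rpf :: "('m \<Rightarrow> 'm \<Rightarrow> bool) \<Rightarrow> ('m set \<times> 'm set) set" where
  "Rpf r = {(P, Q). IP r P \<and> IF r Q \<and>
      Q \<subseteq> fop r P \<and> (\<forall>R. IF r R \<and> R \<subseteq> fop r P \<and> Q \<subseteq> R \<longrightarrow> R = Q) \<and>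
      P \<subseteq> pop r Q \<and> (\<forall>R. IP r R \<and> R \<subseteq> pop r Q \<and> P \<subseteq> R \<longrightarrow> R = P)}"

definition Mbar :: "('m \<Rightarrow> 'm \<Rightarrow> bool) \<Rightarrow> ('m set \<times> 'm set) set" where
  "Mbar r = Rpf r
     \<union> {(P, Q). P = {} \<and> IF r Q \<and> (\<forall>X. (X, Q) \<notin> Rpf r)}
     \<union> {(P, Q). Q = {} \<and> IP r P \<and> (\<forall>X. (P, X) \<notin> Rpf r)}"

definition Phi :: "('m \<Rightarrow> 'm \<Rightarrow> bool) \<Rightarrow> 'm \<Rightarrow> 'm set \<times> 'm set" where
  "Phi r p = (Ipast r {p}, Ifut r {p})"

definition past_lim :: "('m \<Rightarrow> 'm \<Rightarrow> bool) \<Rightarrow> (nat \<Rightarrow> 'm set) \<Rightarrow> 'm set \<Rightarrow> bool" where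
  "past_lim r Pn Q \<longleftrightarrow>
     (\<forall>x\<in>Q. \<forall>\<^sub>F n in sequentially. x \<in> Pn n) \<and>
     (\<forall>x. \<not> Ipast r {x} \<subseteq> Q \<longrightarrow> (\<forall>\<^sub>F n in sequentially. \<not> Ipast r {x} \<subseteq> Pn n))"

definition future_lim :: "('m \<Rightarrow> 'm \<Rightarrow> bool) \<Rightarrow> (nat \<Rightarrow> 'm set) \<Rightarrow> 'm set \<Rightarrow> bool" where
  "future_lim r Pn Q \<longleftrightarrow>
     (\<forall>x\<in>Q. \<forall>\<^sub>F n in sequentially. x \<in> Pn n) \<and>
     (\<forall>x. \<not> Ifut r {x} \<subseteq> Q \<longrightarrow> (\<forall>\<^sub>F n in sequentially. \<not> Ifut r {x} \<subseteq> Pn n))"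

definition LIF :: "('m \<Rightarrow> 'm \<Rightarrow> bool) \<Rightarrow> ('m set \<times> 'm set) set \<Rightarrow> ('m set \<times> 'm set) set" where
  "LIF r S = {Q \<in> Mbar r. snd Q \<noteq> {} \<and> snd Q \<subseteq> (\<Union>R\<in>S. snd R)}"

definition LIP :: "('m \<Rightarrow> 'm \<Rightarrow> bool) \<Rightarrow> ('m set \<times> 'm set) set \<Rightarrow> ('m set \<times> 'm set) set" where
  "LIP r S = {Q \<in> Mbar r. fst Q \<noteq> {} \<and> fst Q \<subseteq> (\<Union>R\<in>S. fst R)}"

definition ClFB :: "('m \<Rightarrow> 'm \<Rightarrow> bool) \<Rightarrow> ('m set \<times> 'm set) set \<Rightarrow> ('m set \<times> 'm set) set" where
  "ClFB r S = S \<union> {Q \<in> Mbar r. snd Q = {} \<and>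
      (\<exists>R. (\<forall>n. R n \<in> S) \<and> past_lim r (\<lambda>n. fst (R n)) (fst Q))}"

definition ClPB :: "('m \<Rightarrow> 'm \<Rightarrow> bool) \<Rightarrow> ('m set \<times> 'm set) set \<Rightarrow> ('m set \<times> 'm set) set" where
  "ClPB r S = S \<union> {Q \<in> Mbar r. fst Q = {} \<and>
      (\<exists>R. (\<forall>n. R n \<in> S) \<and> future_lim r (\<lambda>n. snd (R n)) (snd Q))}"

definition Lplus :: "('m \<Rightarrow> 'm \<Rightarrow> bool) \<Rightarrow> ('m set \<times> 'm set) set \<Rightarrow> ('m set \<times> 'm set) set" where
  "Lplus r S = ClFB r (S \<union> LIF r S)"

definition Lminus :: "('m \<Rightarrow> 'm \<Rightarrow> bool) \<Rightarrow> ('m set \<times> 'm set) set \<Rightarrow> ('m set \<times> 'm set) set" where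
  "Lminus r S = ClPB r (S \<union> LIP r S)"

definition Tbar :: "('m \<Rightarrow> 'm \<Rightarrow> bool) \<Rightarrow> ('m set \<times> 'm set) topology" where
  "Tbar r = topology_generated_by
     ({Mbar r - Lplus r S | S. S \<subseteq> Mbar r} \<union> {Mbar r - Lminus r S | S. S \<subseteq> Mbar r})"

definition T0_separated :: "'x topology \<Rightarrow> 'x \<Rightarrow> 'x \<Rightarrow> bool" where
  "T0_separated X a b \<longleftrightarrow> (\<exists>U. openin X U \<and> ((a \<in> U \<and> b \<notin> U) \<or> (b \<in> U \<and> a \<notin> U)))"

definition T1_separated :: "'x topology \<Rightarrow> 'x \<Rightarrow> 'x \<Rightarrow> bool" where
  "T1_separated X a b \<longleftrightarrow> (\<exists>U. openin X U \<and> a \<in> U \<and> b \<notin> U) \<and> (\<exists>V. openin X V \<and> b \<in> V \<and> a \<notin> V)"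

end

theory Submission
  imports Defs
begin

lemma C1_restrict:
  assumes "C1_piece A good \<gamma> l u" "l \<le> s" "s' \<le> u"
  shows "C1_piece A good \<gamma> s s'"
proof -
  have sub: "{s..s'} \<subseteq> {l..u}" using assms by auto
  from assms(1) obtain \<gamma>' where
    H: "\<forall>c\<in>A.
        continuous_on {t\<in>{l..u}. \<gamma> t \<in> fst c} (\<gamma>' c) \<and>
        (\<forall>t\<in>{l..u}. \<gamma> t \<in> fst c \<longrightarrow>
           ((snd c \<circ> \<gamma>) has_vector_derivative \<gamma>' c t) (at t within {l..u}) \<and>
           good c (snd c (\<gamma> t)) (\<gamma>' c t))"
    unfolding C1_piece_def by blast
  have c1: "continuous_on {s..s'} \<gamma>" using assms(1) sub unfolding C1_piece_def
      using continuous_on_subset by blast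
  have c2: "\<forall>c\<in>A.
        continuous_on {t\<in>{s..s'}. \<gamma> t \<in> fst c} (\<gamma>' c) \<and>
        (\<forall>t\<in>{s..s'}. \<gamma> t \<in> fst c \<longrightarrow>
           ((snd c \<circ> \<gamma>) has_vector_derivative \<gamma>' c t) (at t within {s..s'}) \<and>
           good c (snd c (\<gamma> t)) (\<gamma>' c t))"
  proof
    fix c assume c: "c \<in> A"
    have "{t\<in>{s..s'}. \<gamma> t \<in> fst c} \<subseteq> {t\<in>{l..u}. \<gamma> t \<in> fst c}" using sub by auto
    then have "continuous_on {t\<in>{s..s'}. \<gamma> t \<in> fst c} (\<gamma>' c)"
      using H c continuous_on_subset by blast
    moreover have "\<forall>t\<in>{s..s'}. \<gamma> t \<in> fst c \<longrightarrow>
           ((snd c \<circ> \<gamma>) has_vector_derivative \<gamma>' c t) (at t within {s..s'}) \<and>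
           good c (snd c (\<gamma> t)) (\<gamma>' c t)"
      using H c sub by (meson has_vector_derivative_within_subset subsetD)
    ultimately show "continuous_on {t\<in>{s..s'}. \<gamma> t \<in> fst c} (\<gamma>' c) \<and>
        (\<forall>t\<in>{s..s'}. \<gamma> t \<in> fst c \<longrightarrow>
           ((snd c \<circ> \<gamma>) has_vector_derivative \<gamma>' c t) (at t within {s..s'}) \<and>
           good c (snd c (\<gamma> t)) (\<gamma>' c t))" by blast
  qed
  show ?thesis unfolding C1_piece_def using c1 c2 by blast
qed

lemma C1_cong:
  assumes eq: "\<And>t. t\<in>{s..s'} \<Longrightarrow> \<eta> t = \<gamma> t" and C: "C1_piece A good \<gamma> s s'"
  shows "C1_piece A good \<eta> s s'"
proof -
  from C obtain \<gamma>' where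
    H: "\<forall>c\<in>A.
        continuous_on {t\<in>{s..s'}. \<gamma> t \<in> fst c} (\<gamma>' c) \<and>
        (\<forall>t\<in>{s..s'}. \<gamma> t \<in> fst c \<longrightarrow>
           ((snd c \<circ> \<gamma>) has_vector_derivative \<gamma>' c t) (at t within {s..s'}) \<and>
           good c (snd c (\<gamma> t)) (\<gamma>' c t))"
    unfolding C1_piece_def by blast
  have c1: "continuous_on {s..s'} \<eta>" using C eq unfolding C1_piece_def
    using continuous_on_cong by (metis (no_types, lifting))
  have seteq: "\<And>c. {t\<in>{s..s'}. \<eta> t \<in> fst c} = {t\<in>{s..s'}. \<gamma> t \<in> fst c}" using eq by auto
  have c2: "\<forall>c\<in>A.
        continuous_on {t\<in>{s..s'}. \<eta> t \<in> fst c} (\<gamma>' c) \<and>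
        (\<forall>t\<in>{s..s'}. \<eta> t \<in> fst c \<longrightarrow>
           ((snd c \<circ> \<eta>) has_vector_derivative \<gamma>' c t) (at t within {s..s'}) \<and>
           good c (snd c (\<eta> t)) (\<gamma>' c t))"
  proof (intro ballI conjI impI)
    fix c assume c: "c \<in> A"
    show "continuous_on {t\<in>{s..s'}. \<eta> t \<in> fst c} (\<gamma>' c)" unfolding seteq using H c by blast
    fix t assume t: "t \<in> {s..s'}" "\<eta> t \<in> fst c"
    then have t': "\<gamma> t \<in> fst c" using eq by simp
    have "((snd c \<circ> \<gamma>) has_vector_derivative \<gamma>' c t) (at t within {s..s'})" using H c t t' by blast
    then show "((snd c \<circ> \<eta>) has_vector_derivative \<gamma>' c t) (at t within {s..s'})"
      by (rule has_vector_derivative_transform[OF t(1), rotated]) (simp add: eq)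
    show "good c (snd c (\<eta> t)) (\<gamma>' c t)" using H c t t' eq by simp
  qed
  show ?thesis unfolding C1_piece_def using c1 c2 by blast
qed

lemma C1_affine:
  assumes al: "\<alpha> > 0" and s: "s = \<alpha>*\<sigma>+\<beta>" and s': "s' = \<alpha>*\<sigma>'+\<beta>"
    and scal: "\<And>c x v k. c\<in>A \<Longrightarrow> x \<in> snd c ` fst c \<Longrightarrow> k>0 \<Longrightarrow> good c x v \<Longrightarrow> good c x (k *\<^sub>R v)"
    and C: "C1_piece A good \<gamma> s s'"
  shows "C1_piece A good (\<lambda>u. \<gamma> (\<alpha>*u+\<beta>)) \<sigma> \<sigma>'"
proof -
  define \<phi> where "\<phi> = (\<lambda>u::real. \<alpha>*u+\<beta>)"
  from C obtain \<gamma>' where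
    H: "\<forall>c\<in>A.
        continuous_on {t\<in>{s..s'}. \<gamma> t \<in> fst c} (\<gamma>' c) \<and>
        (\<forall>t\<in>{s..s'}. \<gamma> t \<in> fst c \<longrightarrow>
           ((snd c \<circ> \<gamma>) has_vector_derivative \<gamma>' c t) (at t within {s..s'}) \<and>
           good c (snd c (\<gamma> t)) (\<gamma>' c t))"
    unfolding C1_piece_def by blast
  have img: "\<phi> ` {\<sigma>..\<sigma>'} = {s..s'}"
  proof
    show "\<phi> ` {\<sigma>..\<sigma>'} \<subseteq> {s..s'}" using al s s' by (auto simp: \<phi>_def)
    show "{s..s'} \<subseteq> \<phi> ` {\<sigma>..\<sigma>'}"
    proof
      fix t assume t: "t \<in> {s..s'}"
      have "t = \<phi> ((t-\<beta>)/\<alpha>)" using al by (simp add: \<phi>_def)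
      moreover have "(t-\<beta>)/\<alpha> \<in> {\<sigma>..\<sigma>'}" using t al s s'
        by (auto simp: field_simps)
      ultimately show "t \<in> \<phi> ` {\<sigma>..\<sigma>'}" by blast
    qed
  qed
  have cphi: "continuous_on X \<phi>" for X unfolding \<phi>_def by (intro continuous_intros)
  have c1: "continuous_on {\<sigma>..\<sigma>'} (\<lambda>u. \<gamma> (\<phi> u))"
    using C img unfolding C1_piece_def
    by (intro continuous_on_compose2[OF _ cphi]) auto
  have c2: "\<forall>c\<in>A.
        continuous_on {u\<in>{\<sigma>..\<sigma>'}. \<gamma> (\<phi> u) \<in> fst c} (\<lambda>u. \<alpha> *\<^sub>R \<gamma>' c (\<phi> u)) \<and>
        (\<forall>u\<in>{\<sigma>..\<sigma>'}. \<gamma> (\<phi> u) \<in> fst c \<longrightarrow>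
           ((snd c \<circ> (\<lambda>u. \<gamma> (\<phi> u))) has_vector_derivative \<alpha> *\<^sub>R \<gamma>' c (\<phi> u)) (at u within {\<sigma>..\<sigma>'}) \<and>
           good c (snd c (\<gamma> (\<phi> u))) (\<alpha> *\<^sub>R \<gamma>' c (\<phi> u)))"
  proof (intro ballI conjI impI)
    fix c assume c: "c \<in> A"
    have "continuous_on {u\<in>{\<sigma>..\<sigma>'}. \<gamma> (\<phi> u) \<in> fst c} (\<lambda>u. \<gamma>' c (\<phi> u))"
      using H c img by (intro continuous_on_compose2[OF _ cphi]) auto
    then show "continuous_on {u\<in>{\<sigma>..\<sigma>'}. \<gamma> (\<phi> u) \<in> fst c} (\<lambda>u. \<alpha> *\<^sub>R \<gamma>' c (\<phi> u))"
      by (intro continuous_intros)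
    fix u assume u: "u \<in> {\<sigma>..\<sigma>'}" "\<gamma> (\<phi> u) \<in> fst c"
    have pu: "\<phi> u \<in> {s..s'}" using img u by blast
    have d: "((snd c \<circ> \<gamma>) has_vector_derivative \<gamma>' c (\<phi> u)) (at (\<phi> u) within \<phi> ` {\<sigma>..\<sigma>'})"
      using H c u pu img by auto
    have dp: "(\<phi> has_vector_derivative \<alpha>) (at u within {\<sigma>..\<sigma>'})"
      unfolding \<phi>_def by (auto intro!: derivative_eq_intros)
    have "(((snd c \<circ> \<gamma>) \<circ> \<phi>) has_vector_derivative \<alpha> *\<^sub>R \<gamma>' c (\<phi> u)) (at u within {\<sigma>..\<sigma>'})"
      by (rule vector_diff_chain_within[OF dp d])
    then show "((snd c \<circ> (\<lambda>u. \<gamma> (\<phi> u))) has_vector_derivative \<alpha> *\<^sub>R \<gamma>' c (\<phi> u)) (at u within {\<sigma>..\<sigma>'})"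
      by (simp add: o_def)
    have "good c (snd c (\<gamma> (\<phi> u))) (\<gamma>' c (\<phi> u))" using H c u pu by blast
    then show "good c (snd c (\<gamma> (\<phi> u))) (\<alpha> *\<^sub>R \<gamma>' c (\<phi> u))"
      using scal c u al by blast
  qed
  show ?thesis unfolding C1_piece_def
    apply (rule conjI)
    using c1 apply (simp add: \<phi>_def)
    apply (rule exI[of _ "\<lambda>c u. \<alpha> *\<^sub>R \<gamma>' c (\<phi> u)"])
    using c2 by (simp add: \<phi>_def)
qed

lemma pw_cong:
  assumes eq: "\<And>t. t\<in>{a..b} \<Longrightarrow> \<eta> t = \<gamma> t" and C: "pw_curve A good \<gamma> a b"
  shows "pw_curve A good \<eta> a b"
proof -
  from C obtain K where K: "a < b" "finite K" "a \<in> K" "b \<in> K" "K \<subseteq> {a..b}"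
    "\<forall>s\<in>K. \<forall>s'\<in>K. s < s' \<and> {s<..<s'} \<inter> K = {} \<longrightarrow> C1_piece A good \<gamma> s s'"
    unfolding pw_curve_def by blast
  have "\<forall>s\<in>K. \<forall>s'\<in>K. s < s' \<and> {s<..<s'} \<inter> K = {} \<longrightarrow> C1_piece A good \<eta> s s'"
  proof (intro ballI impI)
    fix s s' assume h: "s \<in> K" "s' \<in> K" "s < s' \<and> {s<..<s'} \<inter> K = {}"
    have "C1_piece A good \<gamma> s s'" using K h by blast
    moreover have "a \<le> s" "s' \<le> b" using K h by auto
    moreover have "\<And>t. t\<in>{s..s'} \<Longrightarrow> \<eta> t = \<gamma> t" using eq calculation(2,3) by auto
    ultimately show "C1_piece A good \<eta> s s'" using C1_cong by metis
  qed
  then show ?thesis unfolding pw_curve_def using K by blast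
qed

lemma pw_affine:
  assumes al: "\<alpha> > 0" and a: "a = \<alpha>*a'+\<beta>" and b: "b = \<alpha>*b'+\<beta>"
    and scal: "\<And>c x v k. c\<in>A \<Longrightarrow> x \<in> snd c ` fst c \<Longrightarrow> k>0 \<Longrightarrow> good c x v \<Longrightarrow> good c x (k *\<^sub>R v)"
    and C: "pw_curve A good \<gamma> a b"
  shows "pw_curve A good (\<lambda>u. \<gamma> (\<alpha>*u+\<beta>)) a' b'"
proof -
  from C obtain K where K: "a < b" "finite K" "a \<in> K" "b \<in> K" "K \<subseteq> {a..b}"
    "\<forall>s\<in>K. \<forall>s'\<in>K. s < s' \<and> {s<..<s'} \<inter> K = {} \<longrightarrow> C1_piece A good \<gamma> s s'"
    unfolding pw_curve_def by blast
  define \<psi> where "\<psi> = (\<lambda>t::real. (t-\<beta>)/\<alpha>)"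
  have psi_inv: "\<alpha> * \<psi> t + \<beta> = t" for t using al by (simp add: \<psi>_def)
  have psi_mono: "\<psi> t < \<psi> t' \<longleftrightarrow> t < t'" for t t' using al by (simp add: \<psi>_def divide_less_cancel)
  have psi_le: "\<psi> t \<le> \<psi> t' \<longleftrightarrow> t \<le> t'" for t t' using psi_mono by (meson not_less)
  have pa: "\<psi> a = a'" "\<psi> b = b'" using al a b by (auto simp: \<psi>_def)
  define K' where "K' = \<psi> ` K"
  have "a' < b'" using K(1) psi_mono pa by metis
  moreover have "finite K'" using K by (simp add: K'_def)
  moreover have "a' \<in> K'" "b' \<in> K'" using K pa by (auto simp: K'_def)
  moreover have "K' \<subseteq> {a'..b'}" using K pa psi_le by (auto simp: K'_def)
  moreover have "\<forall>s\<in>K'. \<forall>s'\<in>K'. s < s' \<and> {s<..<s'} \<inter> K' = {} \<longrightarrow>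
        C1_piece A good (\<lambda>u. \<gamma> (\<alpha>*u+\<beta>)) s s'"
  proof (intro ballI impI)
    fix s s' assume h: "s \<in> K'" "s' \<in> K'" "s < s' \<and> {s<..<s'} \<inter> K' = {}"
    obtain k k' where kk: "k \<in> K" "k' \<in> K" "s = \<psi> k" "s' = \<psi> k'" using h K'_def by blast
    have "k < k'" using kk h psi_mono by blast
    moreover have "{k<..<k'} \<inter> K = {}"
    proof (rule ccontr)
      assume "{k<..<k'} \<inter> K \<noteq> {}"
      then obtain j where "j \<in> K" "k < j" "j < k'" by auto
      then have "\<psi> j \<in> {s<..<s'} \<inter> K'" using kk psi_mono K'_def by auto
      then show False using h by blast
    qed
    ultimately have "C1_piece A good \<gamma> k k'" using K kk by blast
    moreover have "k = \<alpha> * s + \<beta>" "k' = \<alpha> * s' + \<beta>" using kk psi_inv by auto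
    ultimately show "C1_piece A good (\<lambda>u. \<gamma> (\<alpha>*u+\<beta>)) s s'"
      using C1_affine[where \<alpha>=\<alpha> and \<beta>=\<beta> and A=A and good=good, OF al _ _ scal] by blast
  qed
  ultimately show ?thesis unfolding pw_curve_def by blast
qed

lemma pw_join:
  assumes C1: "pw_curve A good \<gamma> a b" and C2: "pw_curve A good \<gamma> b c"
  shows "pw_curve A good \<gamma> a c"
proof -
  from C1 obtain K1 where K1: "a < b" "finite K1" "a \<in> K1" "b \<in> K1" "K1 \<subseteq> {a..b}"
    "\<forall>s\<in>K1. \<forall>s'\<in>K1. s < s' \<and> {s<..<s'} \<inter> K1 = {} \<longrightarrow> C1_piece A good \<gamma> s s'"
    unfolding pw_curve_def by blast
  from C2 obtain K2 where K2: "b < c" "finite K2" "b \<in> K2" "c \<in> K2" "K2 \<subseteq> {b..c}"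
    "\<forall>s\<in>K2. \<forall>s'\<in>K2. s < s' \<and> {s<..<s'} \<inter> K2 = {} \<longrightarrow> C1_piece A good \<gamma> s s'"
    unfolding pw_curve_def by blast
  define K where "K = K1 \<union> K2"
  have "\<forall>s\<in>K. \<forall>s'\<in>K. s < s' \<and> {s<..<s'} \<inter> K = {} \<longrightarrow> C1_piece A good \<gamma> s s'"
  proof (intro ballI impI)
    fix s s' assume h: "s \<in> K" "s' \<in> K" "s < s' \<and> {s<..<s'} \<inter> K = {}"
    have bnot: "\<not> (s < b \<and> b < s')" using h K1 K_def by auto
    show "C1_piece A good \<gamma> s s'"
    proof (cases "s' \<le> b")
      case True
      have "s \<in> K1"
      proof (rule ccontr)
        assume "s \<notin> K1" then have "s \<in> K2" using h K_def by auto
        then show False using K2 h True by auto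
      qed
      moreover have "s' \<in> K1"
      proof (rule ccontr)
        assume "s' \<notin> K1" then have "s' \<in> K2" using h K_def by auto
        then have "s' = b" using K2 True by auto
        then show False using K1 \<open>s' \<notin> K1\<close> by auto
      qed
      ultimately show ?thesis using K1 h K_def by blast
    next
      case False
      then have "b \<le> s" using bnot by auto
      have "s' \<in> K2"
      proof (rule ccontr)
        assume "s' \<notin> K2" then have "s' \<in> K1" using h K_def by auto
        then show False using K1 False by auto
      qed
      moreover have "s \<in> K2"
      proof (rule ccontr)
        assume "s \<notin> K2" then have "s \<in> K1" using h K_def by auto
        then have "s = b" using K1 \<open>b \<le> s\<close> by auto
        then show False using K2 \<open>s \<notin> K2\<close> by auto
      qed
      ultimately show ?thesis using K2 h K_def by blast
    qed
  qed
  moreover have "a < c" "finite K" "a \<in> K" "c \<in> K" "K \<subseteq> {a..c}" using K1 K2 K_def by auto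
  ultimately show ?thesis unfolding pw_curve_def by blast
qed

lemma pw_restrict:
  assumes C: "pw_curve A good \<gamma> a b" and cd: "a \<le> c" "c < d" "d \<le> b"
  shows "pw_curve A good \<gamma> c d"
proof -
  from C obtain K where K: "a < b" "finite K" "a \<in> K" "b \<in> K" "K \<subseteq> {a..b}"
    "\<forall>s\<in>K. \<forall>s'\<in>K. s < s' \<and> {s<..<s'} \<inter> K = {} \<longrightarrow> C1_piece A good \<gamma> s s'"
    unfolding pw_curve_def by blast
  define K' where "K' = (K \<inter> {c..d}) \<union> {c,d}"
  have K'sub: "K' \<subseteq> {c..d}" using cd K'_def by auto
  have "\<forall>s\<in>K'. \<forall>s'\<in>K'. s < s' \<and> {s<..<s'} \<inter> K' = {} \<longrightarrow> C1_piece A good \<gamma> s s'"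
  proof (intro ballI impI)
    fix s s' assume h: "s \<in> K'" "s' \<in> K'" "s < s' \<and> {s<..<s'} \<inter> K' = {}"
    have sc: "c \<le> s" "s' \<le> d" using h K'sub by auto
    define L where "L = {k\<in>K. k \<le> s}"
    define U where "U = {k\<in>K. s' \<le> k}"
    have fL: "finite L" "L \<noteq> {}" using K cd sc unfolding L_def by auto
    have fU: "finite U" "U \<noteq> {}" using K cd sc h unfolding U_def by auto
    define l where "l = Max L"
    define u where "u = Min U"
    have lL: "l \<in> L" using fL l_def by simp
    have uU: "u \<in> U" using fU u_def by simp
    have lmax: "\<And>k. k \<in> L \<Longrightarrow> k \<le> l" using fL l_def by simp
    have umin: "\<And>k. k \<in> U \<Longrightarrow> u \<le> k" using fU u_def by simp
    have ls: "l \<le> s" "l \<in> K" using lL L_def by auto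
    have us: "s' \<le> u" "u \<in> K" using uU U_def by auto
    have "l < u" using ls us h by auto
    moreover have "{l<..<u} \<inter> K = {}"
    proof (rule ccontr)
      assume "{l<..<u} \<inter> K \<noteq> {}"
      then obtain k where k: "k \<in> K" "l < k" "k < u" by auto
      show False
      proof (cases "k \<le> s")
        case True then show False using lmax[of k] k L_def by auto
      next
        case False
        show False
        proof (cases "s' \<le> k")
          case True then show False using umin[of k] k U_def by auto
        next
          case F2: False
          then have "k \<in> K'" using k False sc K'_def by auto
          then have "k \<in> {s<..<s'} \<inter> K'" using False F2 by auto
          then show False using h by blast
        qed
      qed
    qed
    ultimately have "C1_piece A good \<gamma> l u" using K ls us by blast
    then show "C1_piece A good \<gamma> s s'" using C1_restrict ls us by blast
  qed
  moreover have "c < d" "finite K'" "c \<in> K'" "d \<in> K'" using cd K K'_def by auto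
  ultimately show ?thesis unfolding pw_curve_def using K'sub by blast
qed

lemma ft_scal:
  assumes st: "spacetime A G T" and c: "c \<in> A" and x: "x \<in> snd c ` fst c" and k: "k > 0"
    and g: "future_timelike G T c x v"
  shows "future_timelike G T c x (k *\<^sub>R v)"
proof -
  have "lorentzian_form (G c x)" using st c x unfolding spacetime_def by blast
  then have bl: "bilinear (G c x)" unfolding lorentzian_form_def by blast
  have e1: "G c x (k *\<^sub>R v) (k *\<^sub>R v) = k * (k * G c x v v)"
    using bilinear_lmul[OF bl] bilinear_rmul[OF bl] by simp
  have e2: "G c x (k *\<^sub>R v) (T c x) = k * G c x v (T c x)"
    using bilinear_lmul[OF bl] by simp
  have "G c x v v < 0" "G c x v (T c x) < 0" using g unfolding future_timelike_def by auto
  then show ?thesis unfolding future_timelike_def e1 e2 using k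
    by (simp add: mult_pos_neg)
qed

lemma chron_trans:
  assumes st: "spacetime A G T" and pq: "chron A G T p q" and qr: "chron A G T q r"
  shows "chron A G T p r"
proof -
  have scal: "\<And>c x v k. c\<in>A \<Longrightarrow> x \<in> snd c ` fst c \<Longrightarrow> k>0 \<Longrightarrow> future_timelike G T c x v
     \<Longrightarrow> future_timelike G T c x (k *\<^sub>R v)" using ft_scal[OF st] by blast
  obtain \<gamma> where g: "pw_curve A (future_timelike G T) \<gamma> 0 1" "\<gamma> 0 = p" "\<gamma> 1 = q"
    using pq unfolding chron_def by blast
  obtain \<delta> where d: "pw_curve A (future_timelike G T) \<delta> 0 1" "\<delta> 0 = q" "\<delta> 1 = r"
    using qr unfolding chron_def by blast
  define \<eta> where "\<eta> = (\<lambda>s::real. if s \<le> 1 then \<gamma> s else \<delta> (s - 1))"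
  have "pw_curve A (future_timelike G T) \<eta> 0 1"
    by (rule pw_cong[OF _ g(1)]) (simp add: \<eta>_def)
  moreover have "pw_curve A (future_timelike G T) (\<lambda>u. \<delta> (1 * u + (-1))) 1 2"
    using pw_affine[where \<alpha>=1 and \<beta>="-1" and a=0 and b=1 and a'=1 and b'=2 and A=A and good="future_timelike G T" and \<gamma>=\<delta>] scal d(1) by auto
  then have "pw_curve A (future_timelike G T) \<eta> 1 2"
    by (rule pw_cong[rotated]) (auto simp: \<eta>_def g d)
  ultimately have "pw_curve A (future_timelike G T) \<eta> 0 2" by (rule pw_join)
  then have "pw_curve A (future_timelike G T) (\<lambda>u. \<eta> (2 * u + 0)) 0 1"
    using pw_affine[where \<alpha>=2 and \<beta>=0 and a=0 and b=2 and a'=0 and b'=1 and A=A and good="future_timelike G T" and \<gamma>=\<eta>] scal by auto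
  moreover have "\<eta> (2 * 0 + 0) = p" "\<eta> (2 * 1 + 0) = r" using g d by (auto simp: \<eta>_def)
  ultimately show ?thesis unfolding chron_def by (intro exI[of _ "\<lambda>u. \<eta> (2 * u + 0)"]) auto
qed

lemma curve_chron:
  assumes st: "spacetime A G T" and c: "ftl_curve A G T \<gamma>" and t: "0 \<le> t" "t < t'" "t' < 1"
  shows "chron A G T (\<gamma> t) (\<gamma> t')"
proof -
  have scal: "\<And>c x v k. c\<in>A \<Longrightarrow> x \<in> snd c ` fst c \<Longrightarrow> k>0 \<Longrightarrow> future_timelike G T c x v
     \<Longrightarrow> future_timelike G T c x (k *\<^sub>R v)" using ft_scal[OF st] by blast
  have "pw_curve A (future_timelike G T) \<gamma> 0 t'" using c t unfolding ftl_curve_def by auto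
  then have "pw_curve A (future_timelike G T) \<gamma> t t'" by (rule pw_restrict) (use t in auto)
  then have "pw_curve A (future_timelike G T) (\<lambda>u. \<gamma> ((t'-t) * u + t)) 0 1"
    using pw_affine[where \<alpha>="t'-t" and \<beta>=t and a=t and b=t' and a'=0 and b'=1 and A=A and good="future_timelike G T" and \<gamma>=\<gamma>] scal t by auto
  then show ?thesis unfolding chron_def by (intro exI[of _ "\<lambda>u. \<gamma> ((t'-t) * u + t)"]) auto
qed


lemma S_sub_Lplus: "S \<subseteq> Lplus r S" unfolding Lplus_def ClFB_def by auto
lemma S_sub_Lminus: "S \<subseteq> Lminus r S" unfolding Lminus_def ClPB_def by auto

lemma open_Lplus: "S \<subseteq> Mbar r \<Longrightarrow> openin (Tbar r) (Mbar r - Lplus r S)"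
  unfolding Tbar_def by (rule topology_generated_by_Basis) blast
lemma open_Lminus: "S \<subseteq> Mbar r \<Longrightarrow> openin (Tbar r) (Mbar r - Lminus r S)"
  unfolding Tbar_def by (rule topology_generated_by_Basis) blast

lemma notin_Lplus:
  assumes "snd a \<noteq> {}" "\<not> snd a \<subseteq> (\<Union>R\<in>S. snd R)" "a \<notin> S"
  shows "a \<notin> Lplus r S"
  using assms unfolding Lplus_def ClFB_def LIF_def by auto

lemma notin_Lminus:
  assumes "fst a \<noteq> {}" "\<not> fst a \<subseteq> (\<Union>R\<in>S. fst R)" "a \<notin> S"
  shows "a \<notin> Lminus r S"
  using assms unfolding Lminus_def ClPB_def LIP_def by auto

lemma IF_ne: "IF r X \<Longrightarrow> X \<noteq> {}" unfolding IF_def by blast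
lemma IP_ne: "IP r X \<Longrightarrow> X \<noteq> {}" unfolding IP_def by blast

lemma Mbar_snd_empty: "(P, {}) \<in> Mbar r \<Longrightarrow> IP r P"
  unfolding Mbar_def Rpf_def by (auto dest: IF_ne)
lemma Mbar_fst_empty: "({}, Q) \<in> Mbar r \<Longrightarrow> IF r Q"
  unfolding Mbar_def Rpf_def by (auto dest: IP_ne)
lemma Mbar_ne: "(P, Q) \<in> Mbar r \<Longrightarrow> P \<noteq> {} \<Longrightarrow> Q \<noteq> {} \<Longrightarrow> (P, Q) \<in> Rpf r"
  unfolding Mbar_def by auto

lemma Rpf_le:
  assumes a: "(P, Ps) \<in> Rpf r" and b: "(Q, Qs) \<in> Rpf r" and le: "P \<subseteq> Q" "Ps \<subseteq> Qs"
  shows "Ps = Qs"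
proof -
  have "fop r Q \<subseteq> fop r P" using le unfolding fop_def Ifut_def by auto
  moreover have "Qs \<subseteq> fop r Q" "IF r Qs" using b unfolding Rpf_def by auto
  ultimately have "Qs \<subseteq> fop r P" "IF r Qs" by auto
  moreover have "\<forall>R. IF r R \<and> R \<subseteq> fop r P \<and> Ps \<subseteq> R \<longrightarrow> R = Ps" using a unfolding Rpf_def by auto
  ultimately show ?thesis using le by blast
qed

lemma notin_Lplus_IP:
  assumes "IP r Q" "P \<subset> Q"
  shows "(P, {}) \<notin> Lplus r {(Q, {})}"
proof
  assume H: "(P, {}) \<in> Lplus r {(Q, {})}"
  have LIF: "LIF r {(Q, {})} = {}" unfolding LIF_def by auto
  obtain q where q: "q \<in> Q" "q \<notin> P" using assms by auto
  obtain S0 where S0: "Q = Ipast r S0" using assms unfolding IP_def past_set_def by auto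
  then obtain s where s: "s \<in> S0" "r q s" using q unfolding Ipast_def by auto
  have sub: "Ipast r {s} \<subseteq> Q" using s S0 unfolding Ipast_def by auto
  have nsub: "\<not> Ipast r {s} \<subseteq> P" using s q unfolding Ipast_def by auto
  from H have "\<exists>R. (\<forall>n. R n \<in> {(Q, {})}) \<and> past_lim r (\<lambda>n. fst (R n)) P"
    using assms unfolding Lplus_def ClFB_def LIF by auto
  then obtain R where "\<forall>n. R n \<in> {(Q, {})}" "past_lim r (\<lambda>n. fst (R n)) P" by blast
  then have "past_lim r (\<lambda>n. Q) P" by simp
  then have "\<forall>\<^sub>F n in sequentially. \<not> Ipast r {s} \<subseteq> Q" using nsub unfolding past_lim_def by blast
  then show False using sub by simp
qed


lemma sep_plus:
  assumes "a \<in> Mbar r" "b \<in> Mbar r" "a \<notin> Lplus r {b}"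
  shows "\<exists>U. openin (Tbar r) U \<and> a \<in> U \<and> b \<notin> U"
  using assms open_Lplus[of "{b}" r] S_sub_Lplus[of "{b}" r] by (intro exI[of _ "Mbar r - Lplus r {b}"]) auto

lemma sep_minus:
  assumes "a \<in> Mbar r" "b \<in> Mbar r" "a \<notin> Lminus r {b}"
  shows "\<exists>U. openin (Tbar r) U \<and> a \<in> U \<and> b \<notin> U"
  using assms open_Lminus[of "{b}" r] S_sub_Lminus[of "{b}" r] by (intro exI[of _ "Mbar r - Lminus r {b}"]) auto

lemma part1_half:
  assumes a: "(P, Ps) \<in> Mbar r" and b: "(Q, Qs) \<in> Mbar r"
    and ar: "(P, Ps) \<in> Rpf r" and br: "(Q, Qs) \<in> Rpf r"
    and ne: "P \<noteq> {}" "Ps \<noteq> {}" and nq: "Ps \<noteq> Qs"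
  shows "\<exists>U. openin (Tbar r) U \<and> (P, Ps) \<in> U \<and> (Q, Qs) \<notin> U"
proof (cases "Ps \<subseteq> Qs")
  case False
  then have "(P, Ps) \<notin> Lplus r {(Q, Qs)}" using ne by (intro notin_Lplus) auto
  then show ?thesis using sep_plus a b by blast
next
  case True
  then have "\<not> P \<subseteq> Q" using Rpf_le[OF ar br] nq by blast
  then have "(P, Ps) \<notin> Lminus r {(Q, Qs)}" using ne by (intro notin_Lminus) auto
  then show ?thesis using sep_minus a b by blast
qed

lemma part1_T1:
  assumes a: "(P, Ps) \<in> Mbar r" and b: "(Q, Qs) \<in> Mbar r"
    and ne: "P \<noteq> {}" "Ps \<noteq> {}" "Q \<noteq> {}" "Qs \<noteq> {}" and nq: "Ps \<noteq> Qs"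
  shows "T1_separated (Tbar r) (P, Ps) (Q, Qs)"
  unfolding T1_separated_def
  using part1_half[OF a b Mbar_ne[OF a] Mbar_ne[OF b]] part1_half[OF b a Mbar_ne[OF b] Mbar_ne[OF a]]
    ne nq by auto

lemma part2:
  assumes a: "(P, Ps) \<in> Mbar r" and b: "(Q, {}) \<in> Mbar r" and ne: "Ps \<noteq> {}"
  shows "T0_separated (Tbar r) (P, Ps) (Q, {})"
proof -
  have "(P, Ps) \<notin> Lplus r {(Q, {})}" using ne by (intro notin_Lplus) auto
  then show ?thesis unfolding T0_separated_def using sep_plus a b by blast
qed

lemma part3_half:
  assumes a: "(P, {}) \<in> Mbar r" and b: "(Q, {}) \<in> Mbar r" and nq: "P \<noteq> Q"
  shows "\<exists>U. openin (Tbar r) U \<and> (P, {}) \<in> U \<and> (Q, {}) \<notin> U"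
proof (cases "P \<subseteq> Q")
  case False
  have "P \<noteq> {}" using Mbar_snd_empty[OF a] IP_ne by blast
  then have "(P, {}) \<notin> Lminus r {(Q, {})}" using False by (intro notin_Lminus) auto
  then show ?thesis using sep_minus a b by blast
next
  case True
  then have "(P, {}) \<notin> Lplus r {(Q, {})}" using nq Mbar_snd_empty[OF b]
    by (intro notin_Lplus_IP) auto
  then show ?thesis using sep_plus a b by blast
qed

lemma part3:
  assumes a: "(P, {}) \<in> Mbar r" and b: "(Q, {}) \<in> Mbar r" and nq: "P \<noteq> Q"
  shows "T1_separated (Tbar r) (P, {}) (Q, {})"
  unfolding T1_separated_def using part3_half[OF a b nq] part3_half[OF b a] nq by metis

lemma part4:
  assumes a: "(P, {}) \<in> Mbar r" and b: "({}, Qs) \<in> Mbar r"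
  shows "T1_separated (Tbar r) (P, {}) ({}, Qs)"
proof -
  have "P \<noteq> {}" using Mbar_snd_empty[OF a] IP_ne by blast
  then have 1: "(P, {}) \<notin> Lminus r {({}, Qs)}" by (intro notin_Lminus) auto
  have "Qs \<noteq> {}" using Mbar_fst_empty[OF b] IF_ne by blast
  then have 2: "({}, Qs) \<notin> Lplus r {(P, {})}" by (intro notin_Lplus) auto
  show ?thesis unfolding T1_separated_def using sep_minus[OF a b 1] sep_plus[OF b a 2] by blast
qed

lemma curve_part:
  fixes A :: "('m::{t2_space, second_countable_topology}, 'a::euclidean_space) chart set"
  assumes st: "spacetime A G T"
    and b: "(Q, Qs) \<in> Mbar (chron A G T)"
    and ar: "(P, Ps) \<in> Rpf (chron A G T)" and br: "(Q, Qs) \<in> Rpf (chron A G T)"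
    and ne: "Q \<noteq> {}" "Qs \<noteq> {}" and nq: "P \<noteq> Q"
    and c: "ftl_curve A G T \<gamma>" and UP: "(\<Union>t\<in>{0..<1}. Ipast (chron A G T) {\<gamma> t}) = P"
  shows "\<not> (\<forall>N. openin (Tbar (chron A G T)) N \<and> (Q, Qs) \<in> N \<longrightarrow>
                 (\<exists>t\<in>{0..<1}. Phi (chron A G T) ` \<gamma> ` {t..<1} \<subseteq> N))"
proof
  let ?r = "chron A G T"
  assume H: "\<forall>N. openin (Tbar ?r) N \<and> (Q, Qs) \<in> N \<longrightarrow>
                 (\<exists>t\<in>{0..<1}. Phi ?r ` \<gamma> ` {t..<1} \<subseteq> N)"
  have key: False if S: "S \<subseteq> L" and op: "openin (Tbar ?r) (Mbar ?r - L)" and nb: "(Q, Qs) \<notin> L"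
    and t0: "t0 \<in> {0..<1}" and img: "Phi ?r ` \<gamma> ` {t0..<1} \<inter> Mbar ?r \<subseteq> S" for S L t0
  proof -
    obtain t where t: "t \<in> {0..<1}" "Phi ?r ` \<gamma> ` {t..<1} \<subseteq> Mbar ?r - L"
      using H op nb b by blast
    define t' where "t' = max t t0"
    have "t' \<in> {t..<1}" "t' \<in> {t0..<1}" using t t0 by (auto simp: t'_def)
    then have "Phi ?r (\<gamma> t') \<in> Phi ?r ` \<gamma> ` {t..<1}" "Phi ?r (\<gamma> t') \<in> Phi ?r ` \<gamma> ` {t0..<1}" by auto
    then have "Phi ?r (\<gamma> t') \<in> Mbar ?r - L" "Phi ?r (\<gamma> t') \<in> Phi ?r ` \<gamma> ` {t0..<1}" using t(2) by blast+
    then show False using img S by auto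
  qed
  show False
  proof (cases "Q \<subseteq> P")
    case False
    define S where "S = Phi ?r ` \<gamma> ` {0..<1} \<inter> Mbar ?r"
    have U: "(\<Union>R\<in>S. fst R) \<subseteq> P" using UP unfolding S_def Phi_def by auto
    have "(Q, Qs) \<notin> Lminus ?r S"
    proof (rule notin_Lminus)
      show "fst (Q, Qs) \<noteq> {}" using ne by simp
      show "\<not> fst (Q, Qs) \<subseteq> (\<Union>R\<in>S. fst R)" using U False by auto
      then show "(Q, Qs) \<notin> S" by auto
    qed
    moreover have "openin (Tbar ?r) (Mbar ?r - Lminus ?r S)" by (rule open_Lminus) (auto simp: S_def)
    moreover have "S \<subseteq> Lminus ?r S" by (rule S_sub_Lminus)
    moreover have "Phi ?r ` \<gamma> ` {0..<1} \<inter> Mbar ?r \<subseteq> S" unfolding S_def by simp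
    moreover have "(0::real) \<in> {0..<1}" by simp
    ultimately show False using key by blast
  next
    case True
    have "\<exists>t0\<in>{0..<1}. \<not> Qs \<subseteq> (\<Union>t'\<in>{t0..<1}. Ifut ?r {\<gamma> t'})"
    proof (rule ccontr)
      assume "\<not> ?thesis"
      then have C: "\<And>t0. t0 \<in> {0..<1} \<Longrightarrow> Qs \<subseteq> (\<Union>t'\<in>{t0..<1}. Ifut ?r {\<gamma> t'})" by blast
      have "P \<subseteq> pop ?r Qs"
      proof
        fix z assume "z \<in> P"
        then obtain t where t: "t \<in> {0..<1}" "?r z (\<gamma> t)" using UP unfolding Ipast_def by auto
        have "Qs \<subseteq> Ifut ?r {\<gamma> t}"
        proof
          fix y assume "y \<in> Qs"
          then obtain t' where t': "t' \<in> {t..<1}" "?r (\<gamma> t') y" using C[OF t(1)] unfolding Ifut_def by auto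
          have "?r (\<gamma> t) y"
          proof (cases "t' = t")
            case True then show ?thesis using t' by simp
          next
            case False
            then have "?r (\<gamma> t) (\<gamma> t')" using curve_chron[OF st c] t t' by auto
            then show ?thesis using chron_trans[OF st] t' by blast
          qed
          then show "y \<in> Ifut ?r {\<gamma> t}" unfolding Ifut_def by auto
        qed
        then show "z \<in> pop ?r Qs" unfolding pop_def Ipast_def using t by auto
      qed
      moreover have "IP ?r P" using ar unfolding Rpf_def by auto
      moreover have "\<forall>R. IP ?r R \<and> R \<subseteq> pop ?r Qs \<and> Q \<subseteq> R \<longrightarrow> R = Q" using br unfolding Rpf_def by auto
      ultimately show False using True nq by blast
    qed
    then obtain t0 where t0: "t0 \<in> {0..<1}" "\<not> Qs \<subseteq> (\<Union>t'\<in>{t0..<1}. Ifut ?r {\<gamma> t'})" by blast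
    define S where "S = Phi ?r ` \<gamma> ` {t0..<1} \<inter> Mbar ?r"
    have U: "(\<Union>R\<in>S. snd R) \<subseteq> (\<Union>t'\<in>{t0..<1}. Ifut ?r {\<gamma> t'})" unfolding S_def Phi_def by auto
    have "(Q, Qs) \<notin> Lplus ?r S"
    proof (rule notin_Lplus)
      show "snd (Q, Qs) \<noteq> {}" using ne by simp
      show "\<not> snd (Q, Qs) \<subseteq> (\<Union>R\<in>S. snd R)" using U t0 by auto
      then show "(Q, Qs) \<notin> S" by auto
    qed
    moreover have "openin (Tbar ?r) (Mbar ?r - Lplus ?r S)" by (rule open_Lplus) (auto simp: S_def)
    moreover have "S \<subseteq> Lplus ?r S" by (rule S_sub_Lplus)
    moreover have "Phi ?r ` \<gamma> ` {t0..<1} \<inter> Mbar ?r \<subseteq> S" unfolding S_def by simp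
    ultimately show False using key t0(1) by blast
  qed
qed

theorem theorem12:
  fixes A :: "('m::{t2_space, second_countable_topology}, 'a::euclidean_space) chart set"
    and G :: "('m, 'a) chart \<Rightarrow> 'a \<Rightarrow> 'a \<Rightarrow> 'a \<Rightarrow> real"
    and T :: "('m, 'a) chart \<Rightarrow> 'a \<Rightarrow> 'a"
    and P Ps Q Qs :: "'m set"
  assumes st: "spacetime A G T"
    and sc: "strongly_causal A G T"
    and Pbar: "(P, Ps) \<in> Mbar (chron A G T)"
    and Qbar: "(Q, Qs) \<in> Mbar (chron A G T)"
    and neq: "(P, Ps) \<noteq> (Q, Qs)"
  shows
    "(P \<noteq> {} \<and> Ps \<noteq> {} \<and> Q \<noteq> {} \<and> Qs \<noteq> {} \<and> P \<noteq> Q \<and> Ps \<noteq> Qs \<longrightarrow>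
        T1_separated (Tbar (chron A G T)) (P, Ps) (Q, Qs) \<and>
        (\<forall>\<gamma>. ftl_curve A G T \<gamma> \<and> (\<Union>t\<in>{0..<1}. Ipast (chron A G T) {\<gamma> t}) = P \<longrightarrow>
           \<not> (\<forall>N. openin (Tbar (chron A G T)) N \<and> (Q, Qs) \<in> N \<longrightarrow>
                 (\<exists>t\<in>{0..<1}. Phi (chron A G T) ` \<gamma> ` {t..<1} \<subseteq> N))))
     \<and> (P \<noteq> {} \<and> Ps \<noteq> {} \<and> Qs = {} \<longrightarrow> T0_separated (Tbar (chron A G T)) (P, Ps) (Q, Qs))
     \<and> (Ps = {} \<and> Qs = {} \<longrightarrow> T1_separated (Tbar (chron A G T)) (P, Ps) (Q, Qs))
     \<and> (Ps = {} \<and> Q = {} \<longrightarrow> T1_separated (Tbar (chron A G T)) (P, Ps) (Q, Qs))"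
  proof -
  let ?r = "chron A G T"
  have p1: "T1_separated (Tbar ?r) (P, Ps) (Q, Qs) \<and>
        (\<forall>\<gamma>. ftl_curve A G T \<gamma> \<and> (\<Union>t\<in>{0..<1}. Ipast ?r {\<gamma> t}) = P \<longrightarrow>
           \<not> (\<forall>N. openin (Tbar ?r) N \<and> (Q, Qs) \<in> N \<longrightarrow>
                 (\<exists>t\<in>{0..<1}. Phi ?r ` \<gamma> ` {t..<1} \<subseteq> N)))"
    if h: "P \<noteq> {} \<and> Ps \<noteq> {} \<and> Q \<noteq> {} \<and> Qs \<noteq> {} \<and> P \<noteq> Q \<and> Ps \<noteq> Qs"
  proof (intro conjI allI impI)
    show "T1_separated (Tbar ?r) (P, Ps) (Q, Qs)" by (rule part1_T1[OF Pbar Qbar]) (use h in simp_all)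
    fix \<gamma> assume g: "ftl_curve A G T \<gamma> \<and> (\<Union>t\<in>{0..<1}. Ipast ?r {\<gamma> t}) = P"
    show "\<not> (\<forall>N. openin (Tbar ?r) N \<and> (Q, Qs) \<in> N \<longrightarrow>
                 (\<exists>t\<in>{0..<1}. Phi ?r ` \<gamma> ` {t..<1} \<subseteq> N))"
    proof (rule curve_part[OF st Qbar Mbar_ne[OF Pbar] Mbar_ne[OF Qbar]])
      show "P \<noteq> {}" "Ps \<noteq> {}" "Q \<noteq> {}" "Qs \<noteq> {}" "Q \<noteq> {}" "Qs \<noteq> {}" "P \<noteq> Q" using h by simp_all
      show "ftl_curve A G T \<gamma>" using g by simp
      show "(\<Union>t\<in>{0..<1}. Ipast ?r {\<gamma> t}) = P" using g by simp
    qed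
  qed
  have p2: "T0_separated (Tbar ?r) (P, Ps) (Q, Qs)" if h: "P \<noteq> {} \<and> Ps \<noteq> {} \<and> Qs = {}"
  proof -
    have q: "(Q, {}) \<in> Mbar ?r" using Qbar h by simp
    have "T0_separated (Tbar ?r) (P, Ps) (Q, {})" by (rule part2[OF Pbar q]) (use h in simp)
    then show ?thesis using h by simp
  qed
  have p3: "T1_separated (Tbar ?r) (P, Ps) (Q, Qs)" if h: "Ps = {} \<and> Qs = {}"
  proof -
    have p: "(P, {}) \<in> Mbar ?r" using Pbar h by simp
    have q: "(Q, {}) \<in> Mbar ?r" using Qbar h by simp
    have "T1_separated (Tbar ?r) (P, {}) (Q, {})" by (rule part3[OF p q]) (use h neq in simp)
    then show ?thesis using h by simp
  qed
  have p4: "T1_separated (Tbar ?r) (P, Ps) (Q, Qs)" if h: "Ps = {} \<and> Q = {}"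
  proof -
    have p: "(P, {}) \<in> Mbar ?r" using Pbar h by simp
    have q: "({}, Qs) \<in> Mbar ?r" using Qbar h by simp
    have "T1_separated (Tbar ?r) (P, {}) ({}, Qs)" by (rule part4[OF p q])
    then show ?thesis using h by simp
  qed
  show ?thesis
    apply (intro conjI)
       apply (rule impI, erule p1)
      apply (rule impI, erule p2)
     apply (rule impI, erule p3)
    apply (rule impI, erule p4)
    done
qed

end
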